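(* Let $R$ be a bounded principal ideal domain. Then a nonzero non-unit $a\in R$ is c-irreducible if and only if it is irreducible. Equivalently, a nonzero left ideal of $R$ is completely prime if and only if it is a maximal left ideal.
   Context: A principal ideal domain (PID) is a (not necessarily commutative) domain in which every left ideal and every right ideal is principal. An element $p$ is bounded if $Rp$ contains a nonzero two-sided ideal; the PID $R$ is bounded if every nonzero non-unit of $R$ is bounded. A non-unit $a$ is irreducible if $a=bc$ implies $b$ or $c$ is a unit. Elements $b,c$ are similar if $R/Rb\cong R/Rc$ as left $R$-modules. A nonzero $a$ is c-reducible if $a=bb'=c'c$ for some non-units $b,b',c',c$ with $b$ similar to $c$; otherwise c-irreducible. A left ideal $\mathfrak{p}$ is completely prime if $\mathfrak{p}\neq R$ and $ab\in\mathfrak{p}$, $\mathfrak{p}b\subseteq\mathfrak{p}$ imply $a\in\mathfrak{p}$ or $b\in\mathfrak{p}$. *)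

theory Defs
  imports Main
begin

text \<open>The ring R is the ambient type 'a :: ring_1_no_zero_divisors, i.e. a
(not necessarily commutative) domain.\<close>

definition nc_unit :: "'a::ring_1 \<Rightarrow> bool" where
  "nc_unit a \<longleftrightarrow> (\<exists>b. a * b = 1 \<and> b * a = 1)"

definition left_ideal :: "'a::ring_1 set \<Rightarrow> bool" where
  "left_ideal I \<longleftrightarrow> 0 \<in> I \<and> (\<forall>x\<in>I. \<forall>y\<in>I. x + y \<in> I) \<and> (\<forall>x\<in>I. - x \<in> I)
     \<and> (\<forall>r. \<forall>x\<in>I. r * x \<in> I)"

definition right_ideal :: "'a::ring_1 set \<Rightarrow> bool" where
  "right_ideal I \<longleftrightarrow> 0 \<in> I \<and> (\<forall>x\<in>I. \<forall>y\<in>I. x + y \<in> I) \<and> (\<forall>x\<in>I. - x \<in> I)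
     \<and> (\<forall>r. \<forall>x\<in>I. x * r \<in> I)"

definition two_sided_ideal :: "'a::ring_1 set \<Rightarrow> bool" where
  "two_sided_ideal I \<longleftrightarrow> left_ideal I \<and> right_ideal I"

definition lprinc :: "'a::ring_1 \<Rightarrow> 'a set" where
  "lprinc a = {r * a | r. True}"

definition rprinc :: "'a::ring_1 \<Rightarrow> 'a set" where
  "rprinc a = {a * r | r. True}"

definition is_PID :: "'a::ring_1_no_zero_divisors itself \<Rightarrow> bool" where
  "is_PID _ \<longleftrightarrow> (\<forall>I::'a set. left_ideal I \<longrightarrow> (\<exists>a. I = lprinc a))
              \<and> (\<forall>I::'a set. right_ideal I \<longrightarrow> (\<exists>a. I = rprinc a))"

definition bounded_elem :: "'a::ring_1 \<Rightarrow> bool" where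
  "bounded_elem p \<longleftrightarrow> (\<exists>I. two_sided_ideal I \<and> I \<noteq> {0} \<and> I \<subseteq> lprinc p)"

definition bounded_PID :: "'a::ring_1_no_zero_divisors itself \<Rightarrow> bool" where
  "bounded_PID T \<longleftrightarrow> is_PID T \<and>
     (\<forall>a::'a. a \<noteq> 0 \<and> \<not> nc_unit a \<longrightarrow> bounded_elem a)"

definition nc_irreducible :: "'a::ring_1 \<Rightarrow> bool" where
  "nc_irreducible a \<longleftrightarrow> \<not> nc_unit a \<and> (\<forall>b c. a = b * c \<longrightarrow> nc_unit b \<or> nc_unit c)"

text \<open>Cosets x + Rb, the elements of the left module R/Rb.\<close>
definition lcoset :: "'a::ring_1 \<Rightarrow> 'a \<Rightarrow> 'a set" where
  "lcoset b x = {x + y | y. y \<in> lprinc b}"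

text \<open>b and c are similar: R/Rb and R/Rc are isomorphic as left R-modules,
  i.e. there is a bijection of the coset sets that is additive and R-linear.\<close>
definition similar :: "'a::ring_1 \<Rightarrow> 'a \<Rightarrow> bool" where
  "similar b c \<longleftrightarrow> (\<exists>\<phi> :: 'a set \<Rightarrow> 'a set.
     bij_betw \<phi> (range (lcoset b)) (range (lcoset c)) \<and>
     (\<forall>x y u v. \<phi> (lcoset b x) = lcoset c u \<longrightarrow> \<phi> (lcoset b y) = lcoset c v \<longrightarrow>
        \<phi> (lcoset b (x + y)) = lcoset c (u + v)) \<and>
     (\<forall>r x u. \<phi> (lcoset b x) = lcoset c u \<longrightarrow> \<phi> (lcoset b (r * x)) = lcoset c (r * u)))"

definition c_reducible :: "'a::ring_1 \<Rightarrow> bool" where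
  "c_reducible a \<longleftrightarrow> a \<noteq> 0 \<and> (\<exists>b b' c' c. \<not> nc_unit b \<and> \<not> nc_unit b' \<and> \<not> nc_unit c' \<and>
      \<not> nc_unit c \<and> a = b * b' \<and> a = c' * c \<and> similar b c)"

definition c_irreducible :: "'a::ring_1 \<Rightarrow> bool" where
  "c_irreducible a \<longleftrightarrow> a \<noteq> 0 \<and> \<not> c_reducible a"

definition completely_prime :: "'a::ring_1 set \<Rightarrow> bool" where
  "completely_prime P \<longleftrightarrow> P \<noteq> UNIV \<and>
     (\<forall>a b. a * b \<in> P \<and> {x * b | x. x \<in> P} \<subseteq> P \<longrightarrow> a \<in> P \<or> b \<in> P)"

definition maximal_left_ideal :: "'a::ring_1 set \<Rightarrow> bool" where
  "maximal_left_ideal M \<longleftrightarrow> left_ideal M \<and> M \<noteq> UNIV \<and>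
     (\<forall>J. left_ideal J \<and> M \<subseteq> J \<longrightarrow> J = M \<or> J = UNIV)"

end

theory Submission
  imports Defs
begin

lemma lprinc_iff: "x \<in> lprinc a \<longleftrightarrow> (\<exists>r. x = r * a)"
  by (auto simp: lprinc_def)

lemma rprinc_iff: "x \<in> rprinc a \<longleftrightarrow> (\<exists>r. x = a * r)"
  by (auto simp: rprinc_def)

lemma li_0: "left_ideal I \<Longrightarrow> 0 \<in> I" unfolding left_ideal_def by blast
lemma li_add: "left_ideal I \<Longrightarrow> x \<in> I \<Longrightarrow> y \<in> I \<Longrightarrow> x + y \<in> I" unfolding left_ideal_def by blast
lemma li_neg: "left_ideal I \<Longrightarrow> x \<in> I \<Longrightarrow> - x \<in> I" unfolding left_ideal_def by blast
lemma li_mult: "left_ideal I \<Longrightarrow> x \<in> I \<Longrightarrow> r * x \<in> I" unfolding left_ideal_def by blast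
lemma li_diff: "left_ideal I \<Longrightarrow> x \<in> I \<Longrightarrow> y \<in> I \<Longrightarrow> x - y \<in> I"
  unfolding diff_conv_add_uminus by (intro li_add li_neg)
lemma li_UNIV: "left_ideal (UNIV::'a::ring_1 set)" by (simp add: left_ideal_def)

lemma ri_0: "right_ideal I \<Longrightarrow> 0 \<in> I" unfolding right_ideal_def by blast
lemma ri_add: "right_ideal I \<Longrightarrow> x \<in> I \<Longrightarrow> y \<in> I \<Longrightarrow> x + y \<in> I" unfolding right_ideal_def by blast
lemma ri_mult: "right_ideal I \<Longrightarrow> x \<in> I \<Longrightarrow> x * r \<in> I" unfolding right_ideal_def by blast

lemma left_ideal_lprinc: "left_ideal (lprinc (a::'a::ring_1))"
proof -
  have "0 \<in> lprinc a" unfolding lprinc_iff by (rule exI[of _ 0]) simp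
  moreover have "x + y \<in> lprinc a" if h: "x \<in> lprinc a" "y \<in> lprinc a" for x y
  proof -
    obtain r s where "x = r * a" "y = s * a" using h unfolding lprinc_iff by blast
    then have "x + y = (r + s) * a" by (simp add: distrib_right)
    then show ?thesis unfolding lprinc_iff by blast
  qed
  moreover have "- x \<in> lprinc a" if h: "x \<in> lprinc a" for x
  proof -
    obtain r where "x = r * a" using h unfolding lprinc_iff by blast
    then have "- x = (- r) * a" by simp
    then show ?thesis unfolding lprinc_iff by blast
  qed
  moreover have "r * x \<in> lprinc a" if h: "x \<in> lprinc a" for x r
  proof -
    obtain s where "x = s * a" using h unfolding lprinc_iff by blast
    then have "r * x = (r * s) * a" by (simp add: mult.assoc)
    then show ?thesis unfolding lprinc_iff by blast
  qed
  ultimately show ?thesis unfolding left_ideal_def by blast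
qed

lemma right_ideal_rprinc: "right_ideal (rprinc (a::'a::ring_1))"
proof -
  have "0 \<in> rprinc a" unfolding rprinc_iff by (rule exI[of _ 0]) simp
  moreover have "x + y \<in> rprinc a" if h: "x \<in> rprinc a" "y \<in> rprinc a" for x y
  proof -
    obtain r s where "x = a * r" "y = a * s" using h unfolding rprinc_iff by blast
    then have "x + y = a * (r + s)" by (simp add: distrib_left)
    then show ?thesis unfolding rprinc_iff by blast
  qed
  moreover have "- x \<in> rprinc a" if h: "x \<in> rprinc a" for x
  proof -
    obtain r where "x = a * r" using h unfolding rprinc_iff by blast
    then have "- x = a * (- r)" by simp
    then show ?thesis unfolding rprinc_iff by blast
  qed
  moreover have "x * r \<in> rprinc a" if h: "x \<in> rprinc a" for x r
  proof -
    obtain s where "x = a * s" using h unfolding rprinc_iff by blast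
    then have "x * r = a * (s * r)" by (simp add: mult.assoc)
    then show ?thesis unfolding rprinc_iff by blast
  qed
  ultimately show ?thesis unfolding right_ideal_def by blast
qed

lemma self_lprinc: "(a::'a::ring_1) \<in> lprinc a"
  unfolding lprinc_iff by (rule exI[of _ 1]) simp

lemma self_rprinc: "(a::'a::ring_1) \<in> rprinc a"
  unfolding rprinc_iff by (rule exI[of _ 1]) simp

lemma lprinc_sub: "left_ideal I \<Longrightarrow> a \<in> I \<Longrightarrow> lprinc a \<subseteq> I"
proof
  fix x assume "left_ideal I" "a \<in> I" "x \<in> lprinc a"
  then obtain r where "x = r * a" unfolding lprinc_iff by blast
  then show "x \<in> I" using li_mult[OF \<open>left_ideal I\<close> \<open>a \<in> I\<close>] by simp
qed

lemma rprinc_sub: "right_ideal I \<Longrightarrow> a \<in> I \<Longrightarrow> rprinc a \<subseteq> I"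
proof
  fix x assume "right_ideal I" "a \<in> I" "x \<in> rprinc a"
  then obtain r where "x = a * r" unfolding rprinc_iff by blast
  then show "x \<in> I" using ri_mult[OF \<open>right_ideal I\<close> \<open>a \<in> I\<close>] by simp
qed

lemma PID_l: "is_PID TYPE('a::ring_1_no_zero_divisors) \<Longrightarrow> left_ideal (I::'a set) \<Longrightarrow> \<exists>a. I = lprinc a"
proof -
  assume H: "is_PID TYPE('a)" and I: "left_ideal I"
  have "\<forall>I::'a set. left_ideal I \<longrightarrow> (\<exists>a. I = lprinc a)"
    using H unfolding is_PID_def by (rule conjunct1)
  then show ?thesis using I by simp
qed

lemma PID_r: "is_PID TYPE('a::ring_1_no_zero_divisors) \<Longrightarrow> right_ideal (I::'a set) \<Longrightarrow> \<exists>a. I = rprinc a"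
proof -
  assume H: "is_PID TYPE('a)" and I: "right_ideal I"
  have "\<forall>I::'a set. right_ideal I \<longrightarrow> (\<exists>a. I = rprinc a)"
    using H unfolding is_PID_def by (rule conjunct2)
  then show ?thesis using I by simp
qed

lemma unit_left_inv:
  fixes a b :: "'a::ring_1_no_zero_divisors"
  assumes "b * a = 1" shows "nc_unit a"
proof -
  have a0: "a \<noteq> 0" using assms by auto
  have "(a * b - 1) * a = 0" by (simp add: algebra_simps mult.assoc assms)
  then have "a * b = 1" using a0 by simp
  then show ?thesis unfolding nc_unit_def using assms by blast
qed

lemma unit_right_inv:
  fixes a b :: "'a::ring_1_no_zero_divisors"
  assumes "a * b = 1" shows "nc_unit a"
proof -
  have b0: "b \<noteq> 0" using assms by auto
  have "(b * a - 1) * b = 0" by (simp add: algebra_simps mult.assoc assms)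
  then have "b * a = 1" using b0 by simp
  then show ?thesis unfolding nc_unit_def using assms by blast
qed

lemma unit_lprinc: "nc_unit (a::'a::ring_1) \<Longrightarrow> lprinc a = UNIV"
proof -
  assume "nc_unit a"
  then obtain b where "b * a = 1" unfolding nc_unit_def by blast
  then have "x = (x * b) * a" for x by (simp add: mult.assoc)
  then have "x \<in> lprinc a" for x unfolding lprinc_iff by blast
  then show ?thesis by blast
qed

lemma lprinc_UNIV_unit: "lprinc (a::'a::ring_1_no_zero_divisors) = UNIV \<Longrightarrow> nc_unit a"
proof -
  assume "lprinc a = UNIV"
  then have "1 \<in> lprinc a" by simp
  then obtain r where "1 = r * a" unfolding lprinc_iff by blast
  then have "r * a = 1" by (rule sym)
  then show ?thesis by (rule unit_left_inv)
qed

lemma one_in_li: "left_ideal I \<Longrightarrow> 1 \<in> I \<Longrightarrow> I = (UNIV::'a::ring_1 set)"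
proof -
  assume "left_ideal I" "1 \<in> I"
  then have "x * 1 \<in> I" for x using li_mult by blast
  then have "x \<in> I" for x by simp
  then show ?thesis by blast
qed


lemma wf_lprinc:
  assumes PID: "is_PID TYPE('a::ring_1_no_zero_divisors)"
  shows "wf {(d1::'a, d2). lprinc d2 \<subset> lprinc d1}"
proof (rule ccontr)
  assume "\<not> wf {(d1::'a, d2). lprinc d2 \<subset> lprinc d1}"
  then obtain f :: "nat \<Rightarrow> 'a" where f: "\<And>i. lprinc (f i) \<subset> lprinc (f (Suc i))"
    unfolding wf_iff_no_infinite_down_chain by auto
  have mono: "lprinc (f i) \<subseteq> lprinc (f j)" if "i \<le> j" for i j
    using lift_Suc_mono_le[of "\<lambda>i. lprinc (f i)", OF _ that] f by blast
  define U where "U = (\<Union>i. lprinc (f i))"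
  have "left_ideal U"
  proof -
    have "0 \<in> U" unfolding U_def using li_0[OF left_ideal_lprinc] by blast
    moreover have "x + y \<in> U" if h: "x \<in> U" "y \<in> U" for x y
    proof -
      obtain i j where "x \<in> lprinc (f i)" "y \<in> lprinc (f j)" using h unfolding U_def by blast
      then have "x \<in> lprinc (f (max i j))" "y \<in> lprinc (f (max i j))"
        using mono[of i "max i j"] mono[of j "max i j"] by auto
      then have "x + y \<in> lprinc (f (max i j))" by (rule li_add[OF left_ideal_lprinc])
      then show ?thesis unfolding U_def by blast
    qed
    moreover have "- x \<in> U" if h: "x \<in> U" for x
    proof -
      obtain i where "x \<in> lprinc (f i)" using h unfolding U_def by blast
      then have "- x \<in> lprinc (f i)" by (rule li_neg[OF left_ideal_lprinc])
      then show ?thesis unfolding U_def by blast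
    qed
    moreover have "r * x \<in> U" if h: "x \<in> U" for x r
    proof -
      obtain i where "x \<in> lprinc (f i)" using h unfolding U_def by blast
      then have "r * x \<in> lprinc (f i)" by (rule li_mult[OF left_ideal_lprinc])
      then show ?thesis unfolding U_def by blast
    qed
    ultimately show ?thesis unfolding left_ideal_def by blast
  qed
  then obtain g where g: "U = lprinc g" using PID_l[OF PID] by blast
  have "g \<in> U" unfolding g by (rule self_lprinc)
  then obtain n where "g \<in> lprinc (f n)" unfolding U_def by blast
  then have "U \<subseteq> lprinc (f n)" unfolding g by (rule lprinc_sub[OF left_ideal_lprinc])
  moreover have "lprinc (f (Suc n)) \<subseteq> U" unfolding U_def by blast
  ultimately show False using f[of n] by blast
qed

lemma wf_rprinc:
  assumes PID: "is_PID TYPE('a::ring_1_no_zero_divisors)"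
  shows "wf {(d1::'a, d2). rprinc d2 \<subset> rprinc d1}"
proof (rule ccontr)
  assume "\<not> wf {(d1::'a, d2). rprinc d2 \<subset> rprinc d1}"
  then obtain f :: "nat \<Rightarrow> 'a" where f: "\<And>i. rprinc (f i) \<subset> rprinc (f (Suc i))"
    unfolding wf_iff_no_infinite_down_chain by auto
  have mono: "rprinc (f i) \<subseteq> rprinc (f j)" if "i \<le> j" for i j
    using lift_Suc_mono_le[of "\<lambda>i. rprinc (f i)", OF _ that] f by blast
  define U where "U = (\<Union>i. rprinc (f i))"
  have "right_ideal U"
  proof -
    have "0 \<in> U" unfolding U_def using ri_0[OF right_ideal_rprinc] by blast
    moreover have "x + y \<in> U" if h: "x \<in> U" "y \<in> U" for x y
    proof -
      obtain i j where "x \<in> rprinc (f i)" "y \<in> rprinc (f j)" using h unfolding U_def by blast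
      then have "x \<in> rprinc (f (max i j))" "y \<in> rprinc (f (max i j))"
        using mono[of i "max i j"] mono[of j "max i j"] by auto
      then have "x + y \<in> rprinc (f (max i j))" by (rule ri_add[OF right_ideal_rprinc])
      then show ?thesis unfolding U_def by blast
    qed
    moreover have "- x \<in> U" if h: "x \<in> U" for x
    proof -
      obtain i where "x \<in> rprinc (f i)" using h unfolding U_def by blast
      then have "- x \<in> rprinc (f i)" using right_ideal_rprinc unfolding right_ideal_def by blast
      then show ?thesis unfolding U_def by blast
    qed
    moreover have "x * r \<in> U" if h: "x \<in> U" for x r
    proof -
      obtain i where "x \<in> rprinc (f i)" using h unfolding U_def by blast
      then have "x * r \<in> rprinc (f i)" by (rule ri_mult[OF right_ideal_rprinc])
      then show ?thesis unfolding U_def by blast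
    qed
    ultimately show ?thesis unfolding right_ideal_def by blast
  qed
  then obtain g where g: "U = rprinc g" using PID_r[OF PID] by blast
  have "g \<in> U" unfolding g by (rule self_rprinc)
  then obtain n where "g \<in> rprinc (f n)" unfolding U_def by blast
  then have "U \<subseteq> rprinc (f n)" unfolding g by (rule rprinc_sub[OF right_ideal_rprinc])
  moreover have "rprinc (f (Suc n)) \<subseteq> U" unfolding U_def by blast
  ultimately show False using f[of n] by blast
qed

lemma noeth_max:
  assumes PID: "is_PID TYPE('a::ring_1_no_zero_divisors)"
    and ne: "J0 \<in> S" and li: "\<And>J. J \<in> S \<Longrightarrow> left_ideal (J::'a set)"
  shows "\<exists>J\<in>S. \<forall>J'\<in>S. J \<subseteq> J' \<longrightarrow> J' = J"
proof -
  obtain d0 where "J0 = lprinc d0" using PID_l[OF PID li[OF ne]] by blast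
  then have "d0 \<in> {d. lprinc d \<in> S}" using ne by simp
  then obtain z where z: "z \<in> {d. lprinc d \<in> S}"
    and zmin: "\<And>y. (y, z) \<in> {(d1::'a, d2). lprinc d2 \<subset> lprinc d1} \<Longrightarrow> y \<notin> {d. lprinc d \<in> S}"
    using wfE_min[OF wf_lprinc[OF PID]] by metis
  show ?thesis
  proof (intro bexI ballI impI)
    show "lprinc z \<in> S" using z by simp
    fix J' assume "J' \<in> S" "lprinc z \<subseteq> J'"
    obtain y where y: "J' = lprinc y" using PID_l[OF PID li[OF \<open>J' \<in> S\<close>]] by blast
    then have "\<not> lprinc z \<subset> lprinc y" using zmin[of y] \<open>J' \<in> S\<close> by auto
    then show "J' = lprinc z" using y \<open>lprinc z \<subseteq> J'\<close> by blast
  qed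
qed

lemma art_min:
  assumes PID: "is_PID TYPE('a::ring_1_no_zero_divisors)"
    and a0: "(a::'a) \<noteq> 0"
    and ne: "J0 \<in> S" and li: "\<And>J. J \<in> S \<Longrightarrow> left_ideal (J::'a set) \<and> lprinc a \<subseteq> J"
  shows "\<exists>J\<in>S. \<forall>J'\<in>S. J' \<subseteq> J \<longrightarrow> J' = J"
proof -
  define H where "H = {h. \<exists>d. lprinc d \<in> S \<and> a = h * d}"
  have geth: "\<exists>h. h \<in> H \<and> a = h * d" if "lprinc d \<in> S" for d
  proof -
    have "a \<in> lprinc d" using li[OF that] self_lprinc[of a] by blast
    then obtain h where "a = h * d" unfolding lprinc_iff by blast
    then show ?thesis unfolding H_def using that by blast
  qed
  obtain d0 where "J0 = lprinc d0" using PID_l[OF PID conjunct1[OF li[OF ne]]] by blast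
  then obtain h0 where "h0 \<in> H" using geth ne by blast
  then obtain h where hH: "h \<in> H"
    and hmin: "\<And>y. (y, h) \<in> {(d1::'a, d2). rprinc d2 \<subset> rprinc d1} \<Longrightarrow> y \<notin> H"
    using wfE_min[OF wf_rprinc[OF PID]] by metis
  from hH obtain d where dS: "lprinc d \<in> S" and ahd: "a = h * d" unfolding H_def by blast
  have h0': "h \<noteq> 0" using a0 ahd by auto
  have d0': "d \<noteq> 0" using a0 ahd by auto
  show ?thesis
  proof (intro bexI ballI impI)
    show "lprinc d \<in> S" by (rule dS)
    fix J' assume J'S: "J' \<in> S" and sub: "J' \<subseteq> lprinc d"
    obtain d' where d': "J' = lprinc d'" using PID_l[OF PID conjunct1[OF li[OF J'S]]] by blast
    obtain h' where h'H: "h' \<in> H" and ahd': "a = h' * d'" using geth J'S d' by blast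
    have "d' \<in> lprinc d" using sub d' self_lprinc by blast
    then obtain g where g: "d' = g * d" unfolding lprinc_iff by blast
    have "h * d = (h' * g) * d" using ahd ahd' g by (simp add: mult.assoc)
    then have hg: "h = h' * g" using d0' by simp
    have "rprinc h \<subseteq> rprinc h'"
      by (rule rprinc_sub[OF right_ideal_rprinc]) (auto simp: rprinc_iff hg)
    moreover have "\<not> rprinc h \<subset> rprinc h'" using hmin[of h'] h'H by auto
    ultimately have "rprinc h' = rprinc h" by blast
    then have "h' \<in> rprinc h" using self_rprinc by blast
    then obtain s where s: "h' = h * s" unfolding rprinc_iff by blast
    have "h * 1 = h * (s * g)" using hg s by (simp add: mult.assoc)
    then have sg: "s * g = 1" using h0' by (metis mult_cancel_left)
    have "d = s * d'" using g sg by (simp add: mult.assoc[symmetric])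
    then have "d \<in> J'" unfolding d' lprinc_iff by blast
    then have "lprinc d \<subseteq> J'" using lprinc_sub[OF conjunct1[OF li[OF J'S]]] by blast
    then show "J' = lprinc d" using sub by blast
  qed
qed


definition simple_q :: "'a::ring_1 set \<Rightarrow> 'a set \<Rightarrow> bool" where
  "simple_q J K \<longleftrightarrow> left_ideal J \<and> left_ideal K \<and> K \<subset> J \<and>
     (\<forall>I. left_ideal I \<and> K \<subseteq> I \<and> I \<subseteq> J \<longrightarrow> I = K \<or> I = J)"

definition ann :: "'a::ring_1 set \<Rightarrow> 'a set \<Rightarrow> 'a set" where
  "ann J K = {c. \<forall>j\<in>J. c * j \<in> K}"

lemma sq_D:
  assumes "simple_q J K"
  shows "left_ideal J" "left_ideal K" "K \<subset> J"
    "\<And>I. left_ideal I \<Longrightarrow> K \<subseteq> I \<Longrightarrow> I \<subseteq> J \<Longrightarrow> I = K \<or> I = J"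
proof -
  have H: "left_ideal J \<and> left_ideal K \<and> K \<subset> J \<and>
     (\<forall>I. left_ideal I \<and> K \<subseteq> I \<and> I \<subseteq> J \<longrightarrow> I = K \<or> I = J)"
    using assms unfolding simple_q_def .
  show "left_ideal J" using H by (rule conjunct1)
  show "left_ideal K" using H[THEN conjunct2] by (rule conjunct1)
  show "K \<subset> J" using H[THEN conjunct2, THEN conjunct2] by (rule conjunct1)
  fix I assume "left_ideal I" "K \<subseteq> I" "I \<subseteq> J"
  then show "I = K \<or> I = J" using H[THEN conjunct2, THEN conjunct2, THEN conjunct2] by blast
qed

lemma ann_left: "left_ideal K \<Longrightarrow> left_ideal (ann J K)"
proof -
  assume K: "left_ideal K"
  have "0 \<in> ann J K" unfolding ann_def using li_0[OF K] by simp
  moreover have "x + y \<in> ann J K" if h: "x \<in> ann J K" "y \<in> ann J K" for x y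
    using h li_add[OF K] unfolding ann_def by (simp add: distrib_right)
  moreover have "- x \<in> ann J K" if h: "x \<in> ann J K" for x
    using h li_neg[OF K] unfolding ann_def by simp
  moreover have "r * x \<in> ann J K" if h: "x \<in> ann J K" for x r
    using h li_mult[OF K] unfolding ann_def by (simp add: mult.assoc)
  ultimately show ?thesis unfolding left_ideal_def by blast
qed

lemma ann_right: "left_ideal J \<Longrightarrow> left_ideal K \<Longrightarrow> right_ideal (ann J K)"
proof -
  assume J: "left_ideal J" and K: "left_ideal K"
  have "0 \<in> ann J K" unfolding ann_def using li_0[OF K] by simp
  moreover have "x + y \<in> ann J K" if h: "x \<in> ann J K" "y \<in> ann J K" for x y
    using h li_add[OF K] unfolding ann_def by (simp add: distrib_right)
  moreover have "- x \<in> ann J K" if h: "x \<in> ann J K" for x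
    using h li_neg[OF K] unfolding ann_def by simp
  moreover have "x * r \<in> ann J K" if h: "x \<in> ann J K" for x r
    using h li_mult[OF J] unfolding ann_def by (simp add: mult.assoc)
  ultimately show ?thesis unfolding right_ideal_def by blast
qed

lemma ann_prime:
  assumes sq: "simple_q J K" and cb: "\<And>x. c * x * b \<in> ann J K"
  shows "c \<in> ann J K \<or> b \<in> ann J K"
proof (rule disjCI)
  assume "b \<notin> ann J K"
  then obtain t where tJ: "t \<in> J" and btK: "b * t \<notin> K" unfolding ann_def by blast
  have J: "left_ideal J" and K: "left_ideal K" using sq_D(1,2)[OF sq] by auto
  define I where "I = {r * (b * t) + k | r k. k \<in> K}"
  have "left_ideal I"
  proof -
    have "(0::'a) = 0 * (b * t) + 0" by simp
    then have "0 \<in> I" unfolding I_def using li_0[OF K] by blast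
    moreover have "x + y \<in> I" if h: "x \<in> I" "y \<in> I" for x y
    proof -
      obtain r k r' k' where "x = r * (b * t) + k" "k \<in> K" "y = r' * (b * t) + k'" "k' \<in> K"
        using h unfolding I_def by blast
      then have "x + y = (r + r') * (b * t) + (k + k')" "k + k' \<in> K"
        by (simp_all add: algebra_simps li_add[OF K])
      then show ?thesis unfolding I_def by blast
    qed
    moreover have "- x \<in> I" if h: "x \<in> I" for x
    proof -
      obtain r k where "x = r * (b * t) + k" "k \<in> K" using h unfolding I_def by blast
      then have "- x = (- r) * (b * t) + (- k)" "- k \<in> K"
        by (simp_all add: li_neg[OF K])
      then show ?thesis unfolding I_def by blast
    qed
    moreover have "s * x \<in> I" if h: "x \<in> I" for x s
    proof -
      obtain r k where "x = r * (b * t) + k" "k \<in> K" using h unfolding I_def by blast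
      then have "s * x = (s * r) * (b * t) + s * k" "s * k \<in> K"
        by (simp_all add: algebra_simps li_mult[OF K])
      then show ?thesis unfolding I_def by blast
    qed
    ultimately show ?thesis unfolding left_ideal_def by blast
  qed
  moreover have "K \<subseteq> I"
  proof
    fix k assume "k \<in> K"
    then have "k = 0 * (b * t) + k" by simp
    then show "k \<in> I" unfolding I_def using \<open>k \<in> K\<close> by blast
  qed
  moreover have "I \<subseteq> J"
  proof
    fix x assume "x \<in> I"
    then obtain r k where "x = r * (b * t) + k" "k \<in> K" unfolding I_def by blast
    moreover have "r * (b * t) \<in> J" using li_mult[OF J tJ] by (simp add: mult.assoc[symmetric])
    moreover have "k \<in> J" using \<open>k \<in> K\<close> sq_D(3)[OF sq] by blast
    ultimately show "x \<in> J" using li_add[OF J] by simp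
  qed
  moreover have "I \<noteq> K"
  proof
    assume "I = K"
    have "b * t = 1 * (b * t) + 0" by simp
    then have "b * t \<in> I" unfolding I_def using li_0[OF K] by blast
    then show False using \<open>I = K\<close> btK by simp
  qed
  ultimately have IJ: "I = J" using sq_D(4)[OF sq] by blast
  show "c \<in> ann J K" unfolding ann_def mem_Collect_eq
  proof
    fix j assume "j \<in> J"
    then obtain r k where j: "j = r * (b * t) + k" "k \<in> K" unfolding IJ[symmetric] I_def by blast
    have "(c * r * b) * t \<in> K" using cb[of r] tJ unfolding ann_def by blast
    moreover have "c * k \<in> K" using li_mult[OF K j(2)] .
    ultimately have "(c * r * b) * t + c * k \<in> K" by (rule li_add[OF K])
    then show "c * j \<in> K" using j by (simp add: algebra_simps)
  qed
qed

lemma ann_proper: "simple_q J K \<Longrightarrow> 1 \<notin> ann J K"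
proof
  assume sq: "simple_q J K" and "1 \<in> ann J K"
  then have "J \<subseteq> K" unfolding ann_def by auto
  then show False using sq_D(3)[OF sq] by blast
qed

lemma iso_L0:
  assumes sq: "simple_q J K"
    and L0: "left_ideal L0" "ann J K \<subseteq> L0" "L0 \<noteq> ann J K"
    and L0min: "\<And>I. left_ideal I \<Longrightarrow> ann J K \<subseteq> I \<Longrightarrow> I \<subseteq> L0 \<Longrightarrow> I = ann J K \<or> I = L0"
  shows "\<exists>t\<in>J. (\<forall>l\<in>L0. l * t \<in> K \<longleftrightarrow> l \<in> ann J K) \<and> (\<forall>j\<in>J. \<exists>l\<in>L0. \<exists>k\<in>K. j = l * t + k)"
proof -
  have J: "left_ideal J" and K: "left_ideal K" using sq_D(1,2)[OF sq] by auto
  have KJ: "K \<subseteq> J" using sq_D(3)[OF sq] by auto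
  obtain l0 where l0: "l0 \<in> L0" "l0 \<notin> ann J K" using L0 by blast
  then obtain t where tJ: "t \<in> J" and l0t: "l0 * t \<notin> K" unfolding ann_def by blast
  define Ker where "Ker = {l \<in> L0. l * t \<in> K}"
  have "left_ideal Ker"
  proof -
    have "0 \<in> Ker" unfolding Ker_def using li_0[OF K] li_0[OF L0(1)] by simp
    moreover have "x + y \<in> Ker" if h: "x \<in> Ker" "y \<in> Ker" for x y
      using h li_add[OF K] li_add[OF L0(1)] unfolding Ker_def by (simp add: distrib_right)
    moreover have "- x \<in> Ker" if h: "x \<in> Ker" for x
      using h li_neg[OF K] li_neg[OF L0(1)] unfolding Ker_def by simp
    moreover have "r * x \<in> Ker" if h: "x \<in> Ker" for x r
      using h li_mult[OF K] li_mult[OF L0(1)] unfolding Ker_def by (simp add: mult.assoc)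
    ultimately show ?thesis unfolding left_ideal_def by blast
  qed
  moreover have "ann J K \<subseteq> Ker" unfolding Ker_def using L0(2) tJ unfolding ann_def by blast
  moreover have "Ker \<subseteq> L0" unfolding Ker_def by blast
  moreover have "Ker \<noteq> L0" using l0 l0t unfolding Ker_def by blast
  ultimately have KerA: "Ker = ann J K" using L0min by blast
  define Im where "Im = {l * t + k | l k. l \<in> L0 \<and> k \<in> K}"
  have "left_ideal Im"
  proof -
    have "(0::'a) = 0 * t + 0" by simp
    then have "0 \<in> Im" unfolding Im_def using li_0[OF K] li_0[OF L0(1)] by blast
    moreover have "x + y \<in> Im" if h: "x \<in> Im" "y \<in> Im" for x y
    proof -
      obtain r k r' k' where "x = r * t + k" "k \<in> K" "r \<in> L0" "y = r' * t + k'" "k' \<in> K" "r' \<in> L0"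
        using h unfolding Im_def by blast
      then have "x + y = (r + r') * t + (k + k')" "k + k' \<in> K" "r + r' \<in> L0"
        by (simp_all add: algebra_simps li_add[OF K] li_add[OF L0(1)])
      then show ?thesis unfolding Im_def by blast
    qed
    moreover have "- x \<in> Im" if h: "x \<in> Im" for x
    proof -
      obtain r k where "x = r * t + k" "k \<in> K" "r \<in> L0" using h unfolding Im_def by blast
      then have "- x = (- r) * t + (- k)" "- k \<in> K" "- r \<in> L0"
        by (simp_all add: li_neg[OF K] li_neg[OF L0(1)])
      then show ?thesis unfolding Im_def by blast
    qed
    moreover have "s * x \<in> Im" if h: "x \<in> Im" for x s
    proof -
      obtain r k where "x = r * t + k" "k \<in> K" "r \<in> L0" using h unfolding Im_def by blast
      then have "s * x = (s * r) * t + s * k" "s * k \<in> K" "s * r \<in> L0"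
        by (simp_all add: algebra_simps li_mult[OF K] li_mult[OF L0(1)])
      then show ?thesis unfolding Im_def by blast
    qed
    ultimately show ?thesis unfolding left_ideal_def by blast
  qed
  moreover have "K \<subseteq> Im"
  proof
    fix k assume "k \<in> K"
    then have "k = 0 * t + k" by simp
    then show "k \<in> Im" unfolding Im_def using \<open>k \<in> K\<close> li_0[OF L0(1)] by blast
  qed
  moreover have "Im \<subseteq> J"
  proof
    fix x assume "x \<in> Im"
    then obtain r k where "x = r * t + k" "k \<in> K" unfolding Im_def by blast
    moreover have "r * t \<in> J" using li_mult[OF J tJ] .
    moreover have "k \<in> J" using \<open>k \<in> K\<close> KJ by blast
    ultimately show "x \<in> J" using li_add[OF J] by simp
  qed
  moreover have "Im \<noteq> K"
  proof
    assume "Im = K"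
    have "l0 * t = l0 * t + 0" by simp
    then have "l0 * t \<in> Im" unfolding Im_def using li_0[OF K] l0(1) by blast
    then show False using \<open>Im = K\<close> l0t by simp
  qed
  ultimately have ImJ: "Im = J" using sq_D(4)[OF sq] by blast
  have A: "\<forall>l\<in>L0. l * t \<in> K \<longleftrightarrow> l \<in> ann J K" using KerA unfolding Ker_def by blast
  have B: "\<forall>j\<in>J. \<exists>l\<in>L0. \<exists>k\<in>K. j = l * t + k"
  proof
    fix j assume "j \<in> J"
    then have "j \<in> Im" using ImJ by simp
    then show "\<exists>l\<in>L0. \<exists>k\<in>K. j = l * t + k" unfolding Im_def by blast
  qed
  show ?thesis using tJ A B by blast
qed


lemma inv_gen:
  assumes PID: "is_PID TYPE('a::ring_1_no_zero_divisors)"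
    and L: "left_ideal (A::'a set)" and R: "right_ideal A"
  shows "\<exists>p. A = lprinc p \<and> A = rprinc p"
proof -
  obtain p where p: "A = lprinc p" using PID_l[OF PID L] by blast
  obtain p' where p': "A = rprinc p'" using PID_r[OF PID R] by blast
  have pA: "p \<in> A" using p self_lprinc by blast
  have "rprinc p \<subseteq> A" by (rule rprinc_sub[OF R pA])
  moreover have "A \<subseteq> rprinc p"
  proof
    fix y assume yA: "y \<in> A"
    have "p' \<in> A" using p' self_rprinc by blast
    then obtain t where t: "p' = t * p" unfolding p lprinc_iff by blast
    show "y \<in> rprinc p"
    proof (cases "t = 0")
      case True
      then have "p' = 0" using t by simp
      then have "y = p * 0" using yA unfolding p' rprinc_iff by simp
      then show ?thesis unfolding rprinc_iff by blast
    next
      case False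
      have "t * y \<in> A" using li_mult[OF L yA] .
      then obtain r where "t * y = p' * r" unfolding p' rprinc_iff by blast
      then have "t * y = t * (p * r)" using t by (simp add: mult.assoc)
      then have "y = p * r" using False by simp
      then show ?thesis unfolding rprinc_iff by blast
    qed
  qed
  ultimately show ?thesis using p by blast
qed

lemma pow_inv1:
  fixes p :: "'a::ring_1"
  assumes inv: "\<And>r. \<exists>r'. r * p = p * r'"
  shows "\<exists>r'. r * p ^ n = p ^ n * r'"
proof (induction n arbitrary: r)
  case 0
  show ?case by (rule exI[of _ r]) simp
next
  case (Suc n)
  obtain r1 where r1: "r * p ^ n = p ^ n * r1" using Suc by blast
  obtain r2 where r2: "r1 * p = p * r2" using inv by blast
  have "r * p ^ Suc n = (r * p ^ n) * p" by (simp only: power_Suc2 mult.assoc)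
  also have "\<dots> = p ^ n * (r1 * p)" using r1 by (simp add: mult.assoc)
  also have "\<dots> = p ^ n * (p * r2)" using r2 by simp
  also have "\<dots> = p ^ Suc n * r2" by (simp only: power_Suc2 mult.assoc)
  finally show ?case by blast
qed

lemma pow_inv2:
  fixes p :: "'a::ring_1"
  assumes inv: "\<And>r. \<exists>r'. p * r = r' * p"
  shows "\<exists>r'. p ^ n * r = r' * p ^ n"
proof (induction n arbitrary: r)
  case 0
  show ?case by (rule exI[of _ r]) simp
next
  case (Suc n)
  obtain r1 where r1: "p ^ n * r = r1 * p ^ n" using Suc by blast
  obtain r2 where r2: "p * r1 = r2 * p" using inv by blast
  have "p ^ Suc n * r = p * (p ^ n * r)" by (simp add: mult.assoc)
  also have "\<dots> = (p * r1) * p ^ n" using r1 by (simp add: mult.assoc)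
  also have "\<dots> = r2 * p ^ Suc n" using r2 by (simp add: mult.assoc)
  finally show ?case by blast
qed

definition Kf :: "'a::ring_1 \<Rightarrow> 'a \<Rightarrow> nat \<Rightarrow> 'a set" where
  "Kf p a n = {w. p ^ n * w \<in> lprinc a}"

definition Imf :: "'a::ring_1 \<Rightarrow> 'a \<Rightarrow> nat \<Rightarrow> 'a set" where
  "Imf p a n = {p ^ n * s + t * a | s t. True}"

lemma Kf_li:
  fixes p :: "'a::ring_1"
  assumes inv2: "\<And>r. \<exists>r'. p * r = r' * p"
  shows "left_ideal (Kf p a n)"
proof -
  have La: "left_ideal (lprinc a)" by (rule left_ideal_lprinc)
  have "0 \<in> Kf p a n" unfolding Kf_def using li_0[OF La] by simp
  moreover have "x + y \<in> Kf p a n" if h: "x \<in> Kf p a n" "y \<in> Kf p a n" for x y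
    using h li_add[OF La] unfolding Kf_def by (simp add: distrib_left)
  moreover have "- x \<in> Kf p a n" if h: "x \<in> Kf p a n" for x
    using h li_neg[OF La] unfolding Kf_def by simp
  moreover have "r * x \<in> Kf p a n" if h: "x \<in> Kf p a n" for x r
  proof -
    obtain r' where r': "p ^ n * r = r' * p ^ n" using pow_inv2[OF inv2] by blast
    have "p ^ n * (r * x) = r' * (p ^ n * x)" using r' by (simp add: mult.assoc[symmetric])
    moreover have "r' * (p ^ n * x) \<in> lprinc a" using h li_mult[OF La] unfolding Kf_def by simp
    ultimately show ?thesis unfolding Kf_def by simp
  qed
  ultimately show ?thesis unfolding left_ideal_def by blast
qed

lemma Imf_li:
  fixes p :: "'a::ring_1"
  assumes inv1: "\<And>r. \<exists>r'. r * p = p * r'"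
  shows "left_ideal (Imf p a n)"
proof -
  have "(0::'a) = p ^ n * 0 + 0 * a" by simp
  then have "0 \<in> Imf p a n" unfolding Imf_def by blast
  moreover have "x + y \<in> Imf p a n" if h: "x \<in> Imf p a n" "y \<in> Imf p a n" for x y
  proof -
    obtain s t s' t' where "x = p ^ n * s + t * a" "y = p ^ n * s' + t' * a"
      using h unfolding Imf_def by blast
    then have "x + y = p ^ n * (s + s') + (t + t') * a" by (simp add: algebra_simps)
    then show ?thesis unfolding Imf_def by blast
  qed
  moreover have "- x \<in> Imf p a n" if h: "x \<in> Imf p a n" for x
  proof -
    obtain s t where "x = p ^ n * s + t * a" using h unfolding Imf_def by blast
    then have "- x = p ^ n * (- s) + (- t) * a" by simp
    then show ?thesis unfolding Imf_def by blast
  qed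
  moreover have "r * x \<in> Imf p a n" if h: "x \<in> Imf p a n" for x r
  proof -
    obtain s t where x: "x = p ^ n * s + t * a" using h unfolding Imf_def by blast
    obtain r' where r': "r * p ^ n = p ^ n * r'" using pow_inv1[OF inv1] by blast
    have "r * x = (r * p ^ n) * s + (r * t) * a" using x by (simp add: algebra_simps)
    also have "\<dots> = p ^ n * (r' * s) + (r * t) * a" using r' by (simp add: mult.assoc)
    finally show ?thesis unfolding Imf_def by blast
  qed
  ultimately show ?thesis unfolding left_ideal_def by blast
qed

lemma Kf_mono: "Kf p a n \<subseteq> Kf p a (Suc n)"
proof
  fix w assume "w \<in> Kf p a n"
  then have "p * (p ^ n * w) \<in> lprinc a" unfolding Kf_def using li_mult[OF left_ideal_lprinc] by simp
  then show "w \<in> Kf p a (Suc n)" unfolding Kf_def by (simp add: mult.assoc)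
qed

lemma Imf_anti: "Imf p a (Suc n) \<subseteq> Imf p a n"
proof
  fix w assume "w \<in> Imf p a (Suc n)"
  then obtain s t where "w = p ^ Suc n * s + t * a" unfolding Imf_def by blast
  then have "w = p ^ n * (p * s) + t * a" by (simp only: power_Suc2 mult.assoc)
  then show "w \<in> Imf p a n" unfolding Imf_def by blast
qed

lemma Ra_Kf: "lprinc a \<subseteq> Kf p a n"
proof
  fix w assume "w \<in> lprinc a"
  then obtain r where "w = r * a" unfolding lprinc_iff by blast
  then have "p ^ n * w = (p ^ n * r) * a" by (simp add: mult.assoc)
  then show "w \<in> Kf p a n" unfolding Kf_def lprinc_iff by blast
qed

lemma Ra_Imf: "lprinc a \<subseteq> Imf p a n"
proof
  fix w assume "w \<in> lprinc a"
  then obtain r where "w = r * a" unfolding lprinc_iff by blast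
  then have "w = p ^ n * 0 + r * a" by simp
  then show "w \<in> Imf p a n" unfolding Imf_def by blast
qed

lemma fitting:
  fixes p a :: "'a::ring_1_no_zero_divisors"
  assumes PID: "is_PID TYPE('a)" and a0: "a \<noteq> 0"
    and inv1: "\<And>r. \<exists>r'. r * p = p * r'" and inv2: "\<And>r. \<exists>r'. p * r = r' * p"
  shows "\<exists>N\<ge>1. (\<forall>w. w \<in> Kf p a N \<longrightarrow> w \<in> Imf p a N \<longrightarrow> w \<in> lprinc a)
     \<and> (\<forall>m. \<exists>k\<in>Kf p a N. \<exists>i\<in>Imf p a N. m = k + i)"
proof -
  have Kmono: "Kf p a i \<subseteq> Kf p a j" if "i \<le> j" for i j
    using lift_Suc_mono_le[of "Kf p a", OF Kf_mono that] .
  have Ianti: "Imf p a j \<subseteq> Imf p a i" if "i \<le> j" for i j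
    using lift_Suc_antimono_le[of "Imf p a", OF Imf_anti that] .
  have hK: "left_ideal J" if "J \<in> range (Kf p a)" for J
    using that Kf_li[OF inv2] by blast
  have "Kf p a 0 \<in> range (Kf p a)" by simp
  from noeth_max[OF PID this hK]
  obtain J1 where J1: "J1 \<in> range (Kf p a)" and J1max: "\<forall>J'\<in>range (Kf p a). J1 \<subseteq> J' \<longrightarrow> J' = J1"
    by blast
  then obtain n1 where n1: "J1 = Kf p a n1" by blast
  have Kst: "Kf p a m = Kf p a n1" if "n1 \<le> m" for m
  proof -
    have "Kf p a m \<in> range (Kf p a)" by simp
    from bspec[OF J1max this] have "J1 \<subseteq> Kf p a m \<longrightarrow> Kf p a m = J1" .
    then show ?thesis using Kmono[OF that] n1 by simp
  qed
  have hI: "left_ideal J \<and> lprinc a \<subseteq> J" if "J \<in> range (Imf p a)" for J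
    using that Imf_li[OF inv1] Ra_Imf by blast
  have "Imf p a 0 \<in> range (Imf p a)" by simp
  from art_min[OF PID a0 this hI]
  obtain J2 where J2: "J2 \<in> range (Imf p a)" and J2min: "\<forall>J'\<in>range (Imf p a). J' \<subseteq> J2 \<longrightarrow> J' = J2"
    by blast
  then obtain n2 where n2: "J2 = Imf p a n2" by blast
  have Ist: "Imf p a m = Imf p a n2" if "n2 \<le> m" for m
  proof -
    have "Imf p a m \<in> range (Imf p a)" by simp
    from bspec[OF J2min this] have "Imf p a m \<subseteq> J2 \<longrightarrow> Imf p a m = J2" .
    then show ?thesis using Ianti[OF that] n2 by simp
  qed
  define N where "N = Suc (max n1 n2)"
  have KN: "Kf p a (N + N) = Kf p a N" using Kst[of N] Kst[of "N + N"] unfolding N_def by simp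
  have IN: "Imf p a (N + N) = Imf p a N" using Ist[of N] Ist[of "N + N"] unfolding N_def by simp
  have La: "left_ideal (lprinc a)" by (rule left_ideal_lprinc)
  have P1: "w \<in> lprinc a" if wK: "w \<in> Kf p a N" and wI: "w \<in> Imf p a N" for w
  proof -
    obtain s t where w: "w = p ^ N * s + t * a" using wI unfolding Imf_def by blast
    have "p ^ N * w = p ^ (N + N) * s + (p ^ N * t) * a"
      using w by (simp add: algebra_simps power_add)
    moreover have "p ^ N * w \<in> lprinc a" using wK unfolding Kf_def by simp
    moreover have "(p ^ N * t) * a \<in> lprinc a" unfolding lprinc_iff by blast
    ultimately have "p ^ (N + N) * s \<in> lprinc a" using li_diff[OF La] by fastforce
    then have "s \<in> Kf p a N" using KN unfolding Kf_def by blast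
    then have "p ^ N * s \<in> lprinc a" unfolding Kf_def by simp
    moreover have "t * a \<in> lprinc a" unfolding lprinc_iff by blast
    ultimately show ?thesis using w li_add[OF La] by simp
  qed
  have P2: "\<exists>k\<in>Kf p a N. \<exists>i\<in>Imf p a N. m = k + i" for m
  proof -
    have "p ^ N * m = p ^ N * m + 0 * a" by simp
    then have "p ^ N * m \<in> Imf p a (N + N)" using IN unfolding Imf_def by blast
    then obtain s t where st: "p ^ N * m = p ^ (N + N) * s + t * a" unfolding Imf_def by blast
    have "p ^ N * (m - p ^ N * s) = t * a"
      using st by (simp add: algebra_simps power_add)
    then have "m - p ^ N * s \<in> Kf p a N" unfolding Kf_def lprinc_iff by blast
    moreover have "p ^ N * s \<in> Imf p a N"
    proof -
      have "p ^ N * s = p ^ N * s + 0 * a" by simp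
      then show ?thesis unfolding Imf_def by blast
    qed
    moreover have "m = (m - p ^ N * s) + p ^ N * s" by simp
    ultimately show ?thesis by blast
  qed
  have "N \<ge> 1" unfolding N_def by simp
  then show ?thesis using P1 P2 by blast
qed


definition good :: "'a::ring_1 \<Rightarrow> 'a \<Rightarrow> 'a \<Rightarrow> bool" where
  "good a v u \<longleftrightarrow> a * v \<in> lprinc a \<and> v \<notin> lprinc a \<and> u \<notin> lprinc a \<and> u * v \<in> lprinc a
     \<and> (\<exists>w. \<forall>r s. w \<noteq> r * v + s * a)"

lemma split_good:
  fixes a :: "'a::ring_1"
  assumes LK: "left_ideal K'" and LI: "left_ideal I'"
    and aK: "lprinc a \<subseteq> K'" and aI: "lprinc a \<subseteq> I'"
    and cap: "\<And>w. w \<in> K' \<Longrightarrow> w \<in> I' \<Longrightarrow> w \<in> lprinc a"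
    and sum: "\<And>m. \<exists>k\<in>K'. \<exists>i\<in>I'. m = k + i"
    and k0: "k0 \<in> K'" "k0 \<notin> lprinc a" and i0: "i0 \<in> I'" "i0 \<notin> lprinc a"
  shows "\<exists>v u. good a v u"
proof -
  have La: "left_ideal (lprinc a)" by (rule left_ideal_lprinc)
  obtain k i where k: "k \<in> K'" and i: "i \<in> I'" and ki: "1 = k + i" using sum[of 1] by blast
  have split: "x * k = x - x * i" for x
  proof -
    have "x = x * (k + i)" using ki by simp
    then show ?thesis by (simp add: algebra_simps)
  qed
  have I_k: "x * k \<in> I'" if "x \<in> I'" for x
    using split[of x] li_diff[OF LI that li_mult[OF LI i]] by simp
  have aa: "a \<in> lprinc a" by (rule self_lprinc)
  have "a * k \<in> lprinc a"
    using cap[OF li_mult[OF LK k] I_k] aa aI by blast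
  moreover have "k \<notin> lprinc a"
  proof
    assume kR: "k \<in> lprinc a"
    have "k0 * k \<in> lprinc a" by (rule li_mult[OF La kR])
    then have "k0 * k \<in> K'" using aK by blast
    have "k0 * i = k0 - k0 * k" using split[of k0] by (simp add: algebra_simps)
    then have "k0 * i \<in> K'" using li_diff[OF LK k0(1) \<open>k0 * k \<in> K'\<close>] by simp
    then have "k0 * i \<in> lprinc a" using cap li_mult[OF LI i] by blast
    then have "k0 * k + k0 * i \<in> lprinc a" using li_add[OF La \<open>k0 * k \<in> lprinc a\<close>] by blast
    moreover have "k0 * k + k0 * i = k0" using split[of k0] by simp
    ultimately show False using k0(2) by simp
  qed
  moreover have "i0 * k \<in> lprinc a" using cap[OF li_mult[OF LK k] I_k[OF i0(1)]] .
  moreover have "\<forall>r s. i0 \<noteq> r * k + s * a"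
  proof (intro allI notI)
    fix r s assume h: "i0 = r * k + s * a"
    have "r * k \<in> K'" by (rule li_mult[OF LK k])
    moreover have "s * a \<in> lprinc a" unfolding lprinc_iff by blast
    then have "s * a \<in> K'" using aK by blast
    ultimately have "i0 \<in> K'" using h li_add[OF LK] by simp
    then show False using cap[OF _ i0(1)] i0(2) by blast
  qed
  ultimately have "good a k i0" unfolding good_def using i0(2) by blast
  then show ?thesis by blast
qed

lemma lcoset_eq:
  fixes b :: "'a::ring_1"
  shows "lcoset b x = lcoset b y \<longleftrightarrow> x - y \<in> lprinc b"
proof
  have Lb: "left_ideal (lprinc b)" by (rule left_ideal_lprinc)
  assume h: "lcoset b x = lcoset b y"
  have "x = x + 0" by simp
  then have "x \<in> lcoset b x" unfolding lcoset_def using li_0[OF Lb] by blast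
  then have "x \<in> lcoset b y" using h by simp
  then obtain z where "x = y + z" "z \<in> lprinc b" unfolding lcoset_def by blast
  then show "x - y \<in> lprinc b" by simp
next
  have Lb: "left_ideal (lprinc b)" by (rule left_ideal_lprinc)
  assume d: "x - y \<in> lprinc b"
  show "lcoset b x = lcoset b y"
  proof
    show "lcoset b x \<subseteq> lcoset b y"
    proof
      fix w assume "w \<in> lcoset b x"
      then obtain z where z: "w = x + z" "z \<in> lprinc b" unfolding lcoset_def by blast
      have "w = y + ((x - y) + z)" using z by simp
      moreover have "(x - y) + z \<in> lprinc b" using li_add[OF Lb d z(2)] .
      ultimately show "w \<in> lcoset b y" unfolding lcoset_def by blast
    qed
  next
    show "lcoset b y \<subseteq> lcoset b x"
    proof
      fix w assume "w \<in> lcoset b y"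
      then obtain z where z: "w = y + z" "z \<in> lprinc b" unfolding lcoset_def by blast
      have "w = x + (z - (x - y))" using z by simp
      moreover have "z - (x - y) \<in> lprinc b" using li_diff[OF Lb z(2) d] .
      ultimately show "w \<in> lcoset b x" unfolding lcoset_def by blast
    qed
  qed
qed

lemma sim_lemma:
  fixes b e s r0 :: "'a::ring_1"
  assumes iff: "\<And>r. r * s \<in> lprinc b \<longleftrightarrow> r \<in> lprinc e"
    and r0: "1 - r0 * s \<in> lprinc b"
  shows "similar e b"
proof -
  have Lb: "left_ideal (lprinc b)" by (rule left_ideal_lprinc)
  define \<phi> where "\<phi> X = {r * s + z | r z. r \<in> X \<and> z \<in> lprinc b}" for X
  have phi_eq: "\<phi> (lcoset e x) = lcoset b (x * s)" for x
  proof
    show "\<phi> (lcoset e x) \<subseteq> lcoset b (x * s)"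
    proof
      fix w assume "w \<in> \<phi> (lcoset e x)"
      then obtain r z where w: "w = r * s + z" "r \<in> lcoset e x" "z \<in> lprinc b" unfolding \<phi>_def by blast
      obtain m where m: "r = x + m" "m \<in> lprinc e" using w(2) unfolding lcoset_def by blast
      have "m * s \<in> lprinc b" using iff m(2) by blast
      then have "m * s + z \<in> lprinc b" using li_add[OF Lb _ w(3)] by blast
      moreover have "w = x * s + (m * s + z)" using w m by (simp add: algebra_simps)
      ultimately show "w \<in> lcoset b (x * s)" unfolding lcoset_def by blast
    qed
  next
    show "lcoset b (x * s) \<subseteq> \<phi> (lcoset e x)"
    proof
      fix w assume "w \<in> lcoset b (x * s)"
      then obtain z where z: "w = x * s + z" "z \<in> lprinc b" unfolding lcoset_def by blast
      have "x = x + 0" by simp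
      then have "x \<in> lcoset e x" unfolding lcoset_def using li_0[OF left_ideal_lprinc] by blast
      then show "w \<in> \<phi> (lcoset e x)" unfolding \<phi>_def using z by blast
    qed
  qed
  have inj: "inj_on \<phi> (range (lcoset e))"
  proof (rule inj_onI)
    fix X Y assume "X \<in> range (lcoset e)" "Y \<in> range (lcoset e)" and eq: "\<phi> X = \<phi> Y"
    then obtain x y where X: "X = lcoset e x" and Y: "Y = lcoset e y" by blast
    have "lcoset b (x * s) = lcoset b (y * s)" using eq X Y phi_eq by simp
    then have "x * s - y * s \<in> lprinc b" using lcoset_eq by blast
    then have "(x - y) * s \<in> lprinc b" by (simp add: algebra_simps)
    then have "x - y \<in> lprinc e" using iff by blast
    then show "X = Y" using X Y lcoset_eq by blast
  qed
  have img: "\<phi> ` range (lcoset e) = range (lcoset b)"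
  proof
    show "\<phi> ` range (lcoset e) \<subseteq> range (lcoset b)" using phi_eq by auto
  next
    show "range (lcoset b) \<subseteq> \<phi> ` range (lcoset e)"
    proof
      fix Z assume "Z \<in> range (lcoset b)"
      then obtain u where Z: "Z = lcoset b u" by blast
      have "u - u * r0 * s = u * (1 - r0 * s)" by (simp add: algebra_simps)
      then have "u - u * r0 * s \<in> lprinc b" using li_mult[OF Lb r0] by simp
      then have "lcoset b u = lcoset b (u * r0 * s)" using lcoset_eq by blast
      then have "Z = \<phi> (lcoset e (u * r0))" using Z phi_eq[of "u * r0"] by simp
      then show "Z \<in> \<phi> ` range (lcoset e)" by blast
    qed
  qed
  have add: "\<phi> (lcoset e (x + y)) = lcoset b (u + v)"
    if "\<phi> (lcoset e x) = lcoset b u" "\<phi> (lcoset e y) = lcoset b v" for x y u v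
  proof -
    have "x * s - u \<in> lprinc b" "y * s - v \<in> lprinc b" using that by (simp_all add: phi_eq lcoset_eq)
    then have "(x * s - u) + (y * s - v) \<in> lprinc b" by (rule li_add[OF Lb])
    then have "(x + y) * s - (u + v) \<in> lprinc b" by (simp add: algebra_simps)
    then show ?thesis by (simp add: phi_eq lcoset_eq)
  qed
  have lin: "\<phi> (lcoset e (r * x)) = lcoset b (r * u)"
    if "\<phi> (lcoset e x) = lcoset b u" for r x u
  proof -
    have "x * s - u \<in> lprinc b" using that by (simp_all add: phi_eq lcoset_eq)
    then have "r * (x * s - u) \<in> lprinc b" by (rule li_mult[OF Lb])
    then have "(r * x) * s - r * u \<in> lprinc b" by (simp add: algebra_simps)
    then show ?thesis by (simp add: phi_eq lcoset_eq)
  qed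
  have bij: "bij_betw \<phi> (range (lcoset e)) (range (lcoset b))"
    unfolding bij_betw_def using inj img by (intro conjI)
  show ?thesis unfolding similar_def
  proof (rule exI[of _ \<phi>], intro conjI allI impI)
    show "bij_betw \<phi> (range (lcoset e)) (range (lcoset b))" by (rule bij)
  next
    fix x y u v
    assume "\<phi> (lcoset e x) = lcoset b u" "\<phi> (lcoset e y) = lcoset b v"
    then show "\<phi> (lcoset e (x + y)) = lcoset b (u + v)" by (rule add)
  next
    fix r x u
    assume "\<phi> (lcoset e x) = lcoset b u"
    then show "\<phi> (lcoset e (r * x)) = lcoset b (r * u)" by (rule lin)
  qed
qed


lemma good_c_red:
  fixes a :: "'a::ring_1_no_zero_divisors"
  assumes PID: "is_PID TYPE('a)" and a0: "a \<noteq> 0" and g: "good a v u"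
  shows "c_reducible a"
proof -
  have av: "a * v \<in> lprinc a" and vn: "v \<notin> lprinc a" and un: "u \<notin> lprinc a"
    and uv: "u * v \<in> lprinc a" and ww: "\<exists>w. \<forall>r s. w \<noteq> r * v + s * a"
    using g unfolding good_def by blast+
  have La: "left_ideal (lprinc a)" by (rule left_ideal_lprinc)
  define Ks where "Ks = {r. r * v \<in> lprinc a}"
  have "left_ideal Ks"
  proof -
    have "0 \<in> Ks" unfolding Ks_def using li_0[OF La] by simp
    moreover have "x + y \<in> Ks" if h: "x \<in> Ks" "y \<in> Ks" for x y
      using h li_add[OF La] unfolding Ks_def by (simp add: distrib_right)
    moreover have "- x \<in> Ks" if h: "x \<in> Ks" for x
      using h li_neg[OF La] unfolding Ks_def by simp
    moreover have "r * x \<in> Ks" if h: "x \<in> Ks" for x r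
      using h li_mult[OF La] unfolding Ks_def by (simp add: mult.assoc)
    ultimately show ?thesis unfolding left_ideal_def by blast
  qed
  then obtain b where b: "Ks = lprinc b" using PID_l[OF PID] by blast
  define Im where "Im = {r * v + s * a | r s. True}"
  have "left_ideal Im"
  proof -
    have "(0::'a) = 0 * v + 0 * a" by simp
    then have "0 \<in> Im" unfolding Im_def by blast
    moreover have "x + y \<in> Im" if h: "x \<in> Im" "y \<in> Im" for x y
    proof -
      obtain r s r' s' where "x = r * v + s * a" "y = r' * v + s' * a" using h unfolding Im_def by blast
      then have "x + y = (r + r') * v + (s + s') * a" by (simp add: algebra_simps)
      then show ?thesis unfolding Im_def by blast
    qed
    moreover have "- x \<in> Im" if h: "x \<in> Im" for x
    proof -
      obtain r s where "x = r * v + s * a" using h unfolding Im_def by blast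
      then have "- x = (- r) * v + (- s) * a" by simp
      then show ?thesis unfolding Im_def by blast
    qed
    moreover have "t * x \<in> Im" if h: "x \<in> Im" for x t
    proof -
      obtain r s where "x = r * v + s * a" using h unfolding Im_def by blast
      then have "t * x = (t * r) * v + (t * s) * a" by (simp add: algebra_simps)
      then show ?thesis unfolding Im_def by blast
    qed
    ultimately show ?thesis unfolding left_ideal_def by blast
  qed
  then obtain d where d: "Im = lprinc d" using PID_l[OF PID] by blast
  have "a = 0 * v + 1 * a" by simp
  then have "a \<in> lprinc d" unfolding d[symmetric] Im_def by blast
  then obtain e where ae: "a = e * d" unfolding lprinc_iff by blast
  have "v = 1 * v + 0 * a" by simp
  then have "v \<in> lprinc d" unfolding d[symmetric] Im_def by blast
  then obtain g where vg: "v = g * d" unfolding lprinc_iff by blast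
  have "a \<in> Ks" unfolding Ks_def using av by simp
  then obtain c' where ac: "a = c' * b" unfolding b lprinc_iff by blast
  have "d \<in> Im" unfolding d by (rule self_lprinc)
  then obtain s0 t0 where dst: "d = s0 * v + t0 * a" unfolding Im_def by blast
  have d0: "d \<noteq> 0" using a0 ae by auto
  have "1 * d = (s0 * g + t0 * e) * d" using dst vg ae by (simp add: algebra_simps)
  then have one: "1 = s0 * g + t0 * e" using d0 by (simp only: mult_cancel_right) simp
  have sg: "s0 * g = 1 - t0 * e" using one by (simp add: eq_diff_eq)
  have key: "r * g \<in> lprinc e \<longleftrightarrow> r \<in> lprinc b" for r
  proof
    assume "r * g \<in> lprinc e"
    then obtain k where "r * g = k * e" unfolding lprinc_iff by blast
    then have "r * v = k * a" using vg ae by (simp add: mult.assoc[symmetric])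
    then have "r \<in> Ks" unfolding Ks_def lprinc_iff by blast
    then show "r \<in> lprinc b" using b by simp
  next
    assume "r \<in> lprinc b"
    then have "r * v \<in> lprinc a" using b unfolding Ks_def by blast
    then obtain k where "r * v = k * a" unfolding lprinc_iff by blast
    then have "(r * g) * d = (k * e) * d" using vg ae by (simp add: mult.assoc)
    then have "r * g = k * e" using d0 by simp
    then show "r * g \<in> lprinc e" unfolding lprinc_iff by blast
  qed
  have Le: "left_ideal (lprinc e)" by (rule left_ideal_lprinc)
  have iff: "r * s0 \<in> lprinc b \<longleftrightarrow> r \<in> lprinc e" for r
  proof -
    have eq: "r * s0 * g = r - (r * t0) * e"
    proof -
      have "r * s0 * g = r * (s0 * g)" by (simp add: mult.assoc)
      also have "\<dots> = r * (1 - t0 * e)" using sg by simp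
      also have "\<dots> = r - (r * t0) * e" by (simp add: algebra_simps)
      finally show ?thesis .
    qed
    have rte: "(r * t0) * e \<in> lprinc e" unfolding lprinc_iff by blast
    have "r * s0 \<in> lprinc b \<longleftrightarrow> r * s0 * g \<in> lprinc e" using key[of "r * s0"] by simp
    also have "\<dots> \<longleftrightarrow> r \<in> lprinc e"
    proof
      assume "r * s0 * g \<in> lprinc e"
      then have "r - (r * t0) * e \<in> lprinc e" using eq by simp
      then have "(r - (r * t0) * e) + (r * t0) * e \<in> lprinc e" using li_add[OF Le _ rte] by blast
      then show "r \<in> lprinc e" by simp
    next
      assume "r \<in> lprinc e"
      then show "r * s0 * g \<in> lprinc e" using eq li_diff[OF Le _ rte] by simp
    qed
    finally show ?thesis .
  qed
  have r0: "1 - g * s0 \<in> lprinc b"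
  proof -
    have "(1 - g * s0) * g = g * (1 - s0 * g)" by (simp add: algebra_simps)
    also have "\<dots> = (g * t0) * e" using sg by (simp add: mult.assoc)
    finally have "(1 - g * s0) * g \<in> lprinc e" unfolding lprinc_iff by blast
    then show ?thesis using key by blast
  qed
  have sim: "similar e b" by (rule sim_lemma[OF iff r0])
  have nb: "\<not> nc_unit b"
  proof
    assume "nc_unit b"
    then have "1 \<in> Ks" using b unit_lprinc by blast
    then show False using vn unfolding Ks_def by simp
  qed
  have nc': "\<not> nc_unit c'"
  proof
    assume "nc_unit c'"
    then obtain c'' where "c'' * c' = 1" unfolding nc_unit_def by blast
    then have "b = c'' * a" using ac by (simp add: mult.assoc[symmetric])
    then have "b \<in> lprinc a" unfolding lprinc_iff by blast
    then have "lprinc b \<subseteq> lprinc a" by (rule lprinc_sub[OF La])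
    moreover have "u \<in> lprinc b" using uv b unfolding Ks_def by blast
    ultimately show False using un by blast
  qed
  have ne: "\<not> nc_unit e"
  proof
    assume "nc_unit e"
    then obtain e'' where "e'' * e = 1" unfolding nc_unit_def by blast
    then have "d = e'' * a" using ae by (simp add: mult.assoc[symmetric])
    then have "v = (g * e'') * a" using vg by (simp add: mult.assoc)
    then show False using vn unfolding lprinc_iff by blast
  qed
  have nd: "\<not> nc_unit d"
  proof
    assume "nc_unit d"
    then have "Im = UNIV" using d unit_lprinc by blast
    then show False using ww unfolding Im_def by blast
  qed
  show ?thesis unfolding c_reducible_def
    using a0 nb nc' ne nd ae ac sim by blast
qed

lemma pow_prime:
  assumes sq: "simple_q J K" and R: "right_ideal (ann J K)"
    and inv1: "\<And>r. \<exists>r'. r * p = p * r'"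
  shows "p ^ Suc n \<in> ann J K \<Longrightarrow> p \<in> ann J K"
proof (induction n)
  case 0
  then show ?case by simp
next
  case (Suc n)
  have "p ^ Suc n * x * p \<in> ann J K" for x
  proof -
    obtain x' where x': "x * p = p * x'" using inv1 by blast
    have "p ^ Suc n * x * p = p ^ Suc n * (p * x')" using x' by (simp add: mult.assoc)
    also have "\<dots> = p ^ Suc (Suc n) * x'" by (simp only: power_Suc2[of p "Suc n"] mult.assoc)
    finally show ?thesis using ri_mult[OF R Suc.prems] by simp
  qed
  then have "p ^ Suc n \<in> ann J K \<or> p \<in> ann J K" by (rule ann_prime[OF sq])
  then show ?case using Suc.IH by blast
qed


lemma lprinc_0: "lprinc (0::'a::ring_1) = {0}"
  unfolding lprinc_def by auto

lemma core:
  fixes a x y :: "'a::ring_1_no_zero_divisors"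
  assumes PID: "is_PID TYPE('a)" and bnd: "bounded_elem a" and a0: "a \<noteq> 0"
    and axy: "a = x * y" and nx: "\<not> nc_unit x" and ny: "\<not> nc_unit y"
  shows "\<exists>v u. good a v u"
proof -
  define Ra where "Ra = lprinc a"
  have La: "left_ideal Ra" unfolding Ra_def by (rule left_ideal_lprinc)
  have aRa: "a \<in> Ra" unfolding Ra_def by (rule self_lprinc)
  have Ly: "left_ideal (lprinc y)" by (rule left_ideal_lprinc)
  have yU: "lprinc y \<noteq> UNIV" using ny lprinc_UNIV_unit by blast
  have Ray: "Ra \<subseteq> lprinc y"
  proof -
    have "a \<in> lprinc y" unfolding lprinc_iff axy by blast
    then show ?thesis unfolding Ra_def by (rule lprinc_sub[OF Ly])
  qed
  have yRa: "lprinc y \<noteq> Ra"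
  proof
    assume "lprinc y = Ra"
    then have "y \<in> Ra" using self_lprinc by blast
    then obtain r where "y = r * a" unfolding Ra_def lprinc_iff by blast
    then have "1 * y = (r * x) * y" using axy by (simp add: mult.assoc)
    moreover have "y \<noteq> 0" using a0 axy by auto
    ultimately have "r * x = 1" by simp
    then show False using nx unit_left_inv by blast
  qed
  have RaU: "Ra \<noteq> UNIV" using Ray yU by blast
  define SL where "SL = {J. left_ideal J \<and> Ra \<subseteq> J \<and> J \<noteq> UNIV}"
  have "Ra \<in> SL" unfolding SL_def using La RaU by blast
  moreover have "\<And>J. J \<in> SL \<Longrightarrow> left_ideal J" unfolding SL_def by blast
  ultimately obtain L where LS: "L \<in> SL" and Lmax: "\<forall>J'\<in>SL. L \<subseteq> J' \<longrightarrow> J' = L"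
    using noeth_max[OF PID] by blast
  have LL: "left_ideal L" and RaL: "Ra \<subseteq> L" and LU: "L \<noteq> UNIV" using LS unfolding SL_def by blast+
  have sqL: "simple_q UNIV L"
    unfolding simple_q_def
  proof (intro conjI allI impI)
    show "left_ideal (UNIV::'a set)" by (rule li_UNIV)
    show "left_ideal L" by (rule LL)
    show "L \<subset> UNIV" using LU by blast
    fix I :: "'a set" assume h: "left_ideal I \<and> L \<subseteq> I \<and> I \<subseteq> UNIV"
    show "I = L \<or> I = UNIV"
    proof (cases "I = UNIV")
      case False
      then have "I \<in> SL" unfolding SL_def using h RaL by blast
      then show ?thesis using Lmax h by blast
    qed simp
  qed
  have LRa: "L \<noteq> Ra"
  proof
    assume "L = Ra"
    have "lprinc y \<in> SL" unfolding SL_def using Ly Ray yU by blast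
    then have "lprinc y = L" using Lmax Ray \<open>L = Ra\<close> by blast
    then show False using yRa \<open>L = Ra\<close> by simp
  qed
  then obtain u0 where u0L: "u0 \<in> L" and u0n: "u0 \<notin> Ra" using RaL by blast
  define ST where "ST = {J. left_ideal J \<and> Ra \<subseteq> J \<and> J \<noteq> Ra}"
  have "UNIV \<in> ST" unfolding ST_def using li_UNIV RaU by blast
  moreover have "\<And>J. J \<in> ST \<Longrightarrow> left_ideal J \<and> lprinc a \<subseteq> J" unfolding ST_def Ra_def by blast
  ultimately obtain T where TS: "T \<in> ST" and Tmin: "\<forall>J'\<in>ST. J' \<subseteq> T \<longrightarrow> J' = T"
    using art_min[OF PID a0] by blast
  have LT: "left_ideal T" and RaT: "Ra \<subseteq> T" and TRa: "T \<noteq> Ra" using TS unfolding ST_def by blast+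
  have sqT: "simple_q T Ra"
    unfolding simple_q_def
  proof (intro conjI allI impI)
    show "left_ideal T" by (rule LT)
    show "left_ideal Ra" by (rule La)
    show "Ra \<subset> T" using RaT TRa by blast
    fix I :: "'a set" assume h: "left_ideal I \<and> Ra \<subseteq> I \<and> I \<subseteq> T"
    show "I = Ra \<or> I = T"
    proof (cases "I = Ra")
      case False
      then have "I \<in> ST" unfolding ST_def using h by blast
      then show ?thesis using Tmin h by blast
    qed simp
  qed
  have TU: "T \<noteq> UNIV"
  proof
    assume "T = UNIV"
    have "lprinc y \<in> ST" unfolding ST_def using Ly Ray yRa by blast
    then have "lprinc y = T" using Tmin \<open>T = UNIV\<close> by blast
    then show False using yU \<open>T = UNIV\<close> by simp
  qed
  have oneT: "1 \<notin> T" using one_in_li[OF LT] TU by blast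
  obtain t0 where t0T: "t0 \<in> T" and t0n: "t0 \<notin> Ra" using RaT TRa by blast
  define P where "P = ann T Ra"
  define Q where "Q = ann UNIV L"
  have PL: "left_ideal P" unfolding P_def by (rule ann_left[OF La])
  have PR: "right_ideal P" unfolding P_def by (rule ann_right[OF LT La])
  have QL: "left_ideal Q" unfolding Q_def by (rule ann_left[OF LL])
  have QR: "right_ideal Q" unfolding Q_def by (rule ann_right[OF li_UNIV LL])
  obtain I0 where I0: "two_sided_ideal I0" "I0 \<noteq> {0}" "I0 \<subseteq> lprinc a"
    using bnd unfolding bounded_elem_def by blast
  have I0R: "right_ideal I0" using I0(1) unfolding two_sided_ideal_def by blast
  have I0L: "left_ideal I0" using I0(1) unfolding two_sided_ideal_def by blast
  obtain z where zI: "z \<in> I0" and z0: "z \<noteq> 0" using I0(2) li_0[OF I0L] by blast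
  have zP: "z \<in> P" unfolding P_def ann_def using ri_mult[OF I0R zI] I0(3) Ra_def by blast
  have zQ: "z \<in> Q" unfolding Q_def ann_def using ri_mult[OF I0R zI] I0(3) Ra_def RaL by blast
  obtain p where pl: "P = lprinc p" and pr: "P = rprinc p" using inv_gen[OF PID PL PR] by blast
  obtain q where ql: "Q = lprinc q" and qr: "Q = rprinc q" using inv_gen[OF PID QL QR] by blast
  have p0: "p \<noteq> 0" using zP z0 pl lprinc_0 by auto
  have q0: "q \<noteq> 0" using zQ z0 ql lprinc_0 by auto
  have pP: "p \<in> P" unfolding pl by (rule self_lprinc)
  have qQ: "q \<in> Q" unfolding ql by (rule self_lprinc)
  have pinv1: "\<exists>r'. r * p = p * r'" for r
  proof -
    have "r * p \<in> P" using li_mult[OF PL pP] .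
    then show ?thesis unfolding pr rprinc_iff .
  qed
  have pinv2: "\<exists>r'. p * r = r' * p" for r
  proof -
    have "p * r \<in> P" using ri_mult[OF PR pP] .
    then show ?thesis unfolding pl lprinc_iff .
  qed
  have qinv1: "\<exists>r'. r * q = q * r'" for r
  proof -
    have "r * q \<in> Q" using li_mult[OF QL qQ] .
    then show ?thesis unfolding qr rprinc_iff .
  qed
  have qinv2: "\<exists>r'. q * r = r' * q" for r
  proof -
    have "q * r \<in> Q" using ri_mult[OF QR qQ] .
    then show ?thesis unfolding ql lprinc_iff .
  qed
  obtain N where N1: "N \<ge> 1"
    and capP: "\<forall>w. w \<in> Kf p a N \<longrightarrow> w \<in> Imf p a N \<longrightarrow> w \<in> lprinc a"
    and sumP: "\<forall>m. \<exists>k\<in>Kf p a N. \<exists>i\<in>Imf p a N. m = k + i"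
    using fitting[OF PID a0 pinv1 pinv2] by blast
  obtain N' where NN': "N = Suc N'" using N1 by (cases N) auto
  have t0K: "t0 \<in> Kf p a N"
  proof -
    have "p * t0 \<in> Ra" using pP t0T unfolding P_def ann_def by blast
    then have "p ^ N' * (p * t0) \<in> Ra" using li_mult[OF La] by blast
    then have "p ^ N' * (p * t0) \<in> lprinc a" unfolding Ra_def .
    then show ?thesis unfolding Kf_def NN' by (simp only: power_Suc2 mult.assoc mem_Collect_eq)
  qed
  show ?thesis
  proof (cases "\<exists>i0. i0 \<in> Imf p a N \<and> i0 \<notin> lprinc a")
    case True
    then obtain i0 where "i0 \<in> Imf p a N" "i0 \<notin> lprinc a" by blast
    then show ?thesis
      using split_good[OF Kf_li[OF pinv2] Imf_li[OF pinv1] Ra_Kf Ra_Imf _ _ t0K] capP sumP t0n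
      unfolding Ra_def by blast
  next
    case False
    then have pN: "p ^ N * s \<in> Ra" for s
    proof -
      have "p ^ N * s = p ^ N * s + 0 * a" by simp
      then have "p ^ N * s \<in> Imf p a N" unfolding Imf_def by blast
      then show ?thesis using False unfolding Ra_def by blast
    qed
    obtain M where M1: "M \<ge> 1"
      and capQ: "\<forall>w. w \<in> Kf q a M \<longrightarrow> w \<in> Imf q a M \<longrightarrow> w \<in> lprinc a"
      and sumQ: "\<forall>m. \<exists>k\<in>Kf q a M. \<exists>i\<in>Imf q a M. m = k + i"
      using fitting[OF PID a0 qinv1 qinv2] by blast
    obtain M' where MM': "M = Suc M'" using M1 by (cases M) auto
    have ImfL: "Imf q a M \<subseteq> L"
    proof
      fix w assume "w \<in> Imf q a M"
      then obtain s t where w: "w = q ^ M * s + t * a" unfolding Imf_def by blast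
      have "q * (q ^ M' * s) \<in> L" using qQ unfolding Q_def ann_def by blast
      then have "q ^ M * s \<in> L" unfolding MM' by (simp add: mult.assoc)
      moreover have "t * a \<in> L" using RaL li_mult[OF La aRa] by blast
      ultimately show "w \<in> L" using w li_add[OF LL] by simp
    qed
    obtain k i where kK: "k \<in> Kf q a M" and iI: "i \<in> Imf q a M" and ki: "1 = k + i"
      using sumQ by blast
    have kn: "k \<notin> lprinc a"
    proof
      assume "k \<in> lprinc a"
      then have "k \<in> Imf q a M" using Ra_Imf by blast
      then have "k + i \<in> Imf q a M" using li_add[OF Imf_li[OF qinv1] _ iI] by blast
      then have "1 \<in> L" using ki ImfL by auto
      then show False using one_in_li[OF LL] LU by blast
    qed
    show ?thesis
    proof (cases "\<exists>i0. i0 \<in> Imf q a M \<and> i0 \<notin> lprinc a")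
      case True
      then obtain i0 where "i0 \<in> Imf q a M" "i0 \<notin> lprinc a" by blast
      then show ?thesis
        using split_good[OF Kf_li[OF qinv2] Imf_li[OF qinv1] Ra_Kf Ra_Imf _ _ kK kn] capQ sumQ
        by blast
    next
      case False
      then have qM: "q ^ M * s \<in> Ra" for s
      proof -
        have "q ^ M * s = q ^ M * s + 0 * a" by simp
        then have "q ^ M * s \<in> Imf q a M" unfolding Imf_def by blast
        then show ?thesis using False unfolding Ra_def by blast
      qed
      have "p ^ Suc N' \<in> Q" unfolding Q_def ann_def using pN RaL NN' by blast
      then have pQ: "p \<in> Q" unfolding Q_def
        by (rule pow_prime[OF sqL QR[unfolded Q_def] pinv1])
      have "q ^ Suc M' \<in> P" unfolding P_def ann_def using qM MM' by blast
      then have qP: "q \<in> P" unfolding P_def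
        by (rule pow_prime[OF sqT PR[unfolded P_def] qinv1])
      have PQ: "P = Q"
      proof
        show "P \<subseteq> Q" unfolding pl by (rule lprinc_sub[OF QL pQ])
        show "Q \<subseteq> P" unfolding ql by (rule lprinc_sub[OF PL qP])
      qed
      have oneP: "1 \<notin> P" unfolding P_def by (rule ann_proper[OF sqT])
      define S0 where "S0 = {J. left_ideal J \<and> P \<subseteq> J \<and> J \<noteq> P}"
      have "UNIV \<in> S0" unfolding S0_def using li_UNIV oneP by blast
      moreover have "\<And>J. J \<in> S0 \<Longrightarrow> left_ideal J \<and> lprinc p \<subseteq> J" unfolding S0_def pl by blast
      ultimately obtain L0 where L0S: "L0 \<in> S0" and L0min: "\<forall>J'\<in>S0. J' \<subseteq> L0 \<longrightarrow> J' = L0"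
        using art_min[OF PID p0] by blast
      have L0L: "left_ideal L0" and PL0: "P \<subseteq> L0" and L0P: "L0 \<noteq> P" using L0S unfolding S0_def by blast+
      have L0m: "I = P \<or> I = L0" if "left_ideal I" "P \<subseteq> I" "I \<subseteq> L0" for I
      proof (cases "I = P")
        case False
        then have "I \<in> S0" unfolding S0_def using that by blast
        then show ?thesis using L0min that by blast
      qed simp
      have isoS: "\<exists>s\<in>UNIV. (\<forall>l\<in>L0. l * s \<in> L \<longleftrightarrow> l \<in> ann UNIV L) \<and> (\<forall>j\<in>UNIV. \<exists>l\<in>L0. \<exists>k\<in>L. j = l * s + k)"
        by (rule iso_L0[OF sqL L0L]) (use PL0 L0P L0m PQ in \<open>auto simp: Q_def\<close>)
      then obtain s where sker: "\<forall>l\<in>L0. l * s \<in> L \<longleftrightarrow> l \<in> P"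
        and ssur: "\<forall>j. \<exists>l\<in>L0. \<exists>k\<in>L. j = l * s + k"
        using PQ unfolding Q_def by auto
      have isoT: "\<exists>t\<in>T. (\<forall>l\<in>L0. l * t \<in> Ra \<longleftrightarrow> l \<in> ann T Ra) \<and> (\<forall>j\<in>T. \<exists>l\<in>L0. \<exists>k\<in>Ra. j = l * t + k)"
        by (rule iso_L0[OF sqT L0L]) (use PL0 L0P L0m in \<open>auto simp: P_def\<close>)
      then obtain t where tT: "t \<in> T" and tker: "\<forall>l\<in>L0. l * t \<in> Ra \<longleftrightarrow> l \<in> P"
        unfolding P_def by blast
      obtain l1 m1 where l1: "l1 \<in> L0" and m1: "m1 \<in> L" and one: "1 = l1 * s + m1"
        using ssur by blast
      define v where "v = l1 * t"
      have Lv: "m * v \<in> Ra" if mL: "m \<in> L" for m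
      proof -
        have ml1: "m * l1 \<in> L0" using li_mult[OF L0L l1] .
        have "(m * l1) * s = m - m * m1"
        proof -
          have "m = m * (l1 * s + m1)" using one by simp
          then show ?thesis by (simp add: algebra_simps)
        qed
        moreover have "m - m * m1 \<in> L" using li_diff[OF LL mL li_mult[OF LL m1]] .
        ultimately have "(m * l1) * s \<in> L" by simp
        then have "m * l1 \<in> P" using sker ml1 by blast
        then have "(m * l1) * t \<in> Ra" using tker ml1 by blast
        then show ?thesis unfolding v_def by (simp add: mult.assoc)
      qed
      have "a * v \<in> Ra" using Lv RaL aRa by blast
      moreover have "u0 * v \<in> Ra" using Lv u0L by blast
      moreover have "v \<notin> Ra"
      proof
        assume "v \<in> Ra"
        then have "l1 \<in> P" using tker l1 unfolding v_def by blast
        then have "l1 * s \<in> L" using sker l1 by blast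
        then have "l1 * s + m1 \<in> L" using li_add[OF LL _ m1] by blast
        then have "1 \<in> L" using one by simp
        then show False using one_in_li[OF LL] LU by blast
      qed
      moreover have "\<forall>r s'. 1 \<noteq> r * v + s' * a"
      proof (intro allI notI)
        fix r s' assume h: "1 = r * v + s' * a"
        have "r * v \<in> T" unfolding v_def using li_mult[OF LT tT, of "r * l1"] by (simp add: mult.assoc)
        moreover have "s' * a \<in> T" using RaT li_mult[OF La aRa] by blast
        ultimately have "r * v + s' * a \<in> T" using li_add[OF LT] by blast
        then have "1 \<in> T" using h by simp
        then show False using oneT by blast
      qed
      ultimately have "good a v u0" unfolding good_def Ra_def using u0n unfolding Ra_def by blast
      then show ?thesis by blast
    qed
  qed
qed


theorem corollary3p8:
  assumes "bounded_PID TYPE('a::ring_1_no_zero_divisors)"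
  shows "(\<forall>a::'a. a \<noteq> 0 \<and> \<not> nc_unit a \<longrightarrow> (c_irreducible a \<longleftrightarrow> nc_irreducible a))
       \<and> (\<forall>P::'a set. left_ideal P \<and> P \<noteq> {0} \<longrightarrow> (completely_prime P \<longleftrightarrow> maximal_left_ideal P))"
proof -
  have H: "is_PID TYPE('a) \<and> (\<forall>a::'a. a \<noteq> 0 \<and> \<not> nc_unit a \<longrightarrow> bounded_elem a)"
    using assms unfolding bounded_PID_def .
  have PID: "is_PID TYPE('a)" using H by (rule conjunct1)
  have bnd: "bounded_elem a" if "a \<noteq> 0" "\<not> nc_unit a" for a :: 'a
    using H[THEN conjunct2] that by blast
  have red: "\<exists>v u. good a v u"
    if hr: "a \<noteq> 0" "\<not> nc_unit a" "\<not> nc_irreducible a" for a :: 'a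
  proof -
    obtain x y where "a = x * y" "\<not> nc_unit x" "\<not> nc_unit y"
      using hr(2,3) unfolding nc_irreducible_def by blast
    then show ?thesis using core[OF PID bnd[OF hr(1,2)] hr(1)] by blast
  qed
  have part1: "c_irreducible a \<longleftrightarrow> nc_irreducible a" if a: "a \<noteq> 0" "\<not> nc_unit a" for a :: 'a
  proof
    assume ci: "c_irreducible a"
    show "nc_irreducible a"
    proof (rule ccontr)
      assume "\<not> nc_irreducible a"
      then obtain v u where "good a v u" using red a by blast
      then have "c_reducible a" by (rule good_c_red[OF PID a(1)])
      then show False using ci unfolding c_irreducible_def by blast
    qed
  next
    assume ni: "nc_irreducible a"
    have "\<not> c_reducible a"
    proof
      assume "c_reducible a"
      then obtain b b' where "\<not> nc_unit b" "\<not> nc_unit b'" "a = b * b'"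
        unfolding c_reducible_def by blast
      then show False using ni unfolding nc_irreducible_def by blast
    qed
    then show "c_irreducible a" unfolding c_irreducible_def using a(1) by blast
  qed
  have part2: "completely_prime P \<longleftrightarrow> maximal_left_ideal P"
    if P: "left_ideal P" "P \<noteq> {0}" for P :: "'a set"
  proof
    obtain a where Pa: "P = lprinc a" using PID_l[OF PID P(1)] by blast
    have a0: "a \<noteq> 0" using P(2) Pa lprinc_0 by auto
    assume cp: "completely_prime P"
    have PU: "P \<noteq> UNIV" using cp unfolding completely_prime_def by blast
    have nu: "\<not> nc_unit a" using PU Pa unit_lprinc by blast
    have ni: "nc_irreducible a"
    proof (rule ccontr)
      assume "\<not> nc_irreducible a"
      then obtain v u where g: "good a v u" using red a0 nu by blast
      have uv: "u * v \<in> P" and un: "u \<notin> P" and vn: "v \<notin> P" and av: "a * v \<in> P"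
        using g unfolding good_def Pa by blast+
      have sub: "{x * v | x. x \<in> P} \<subseteq> P"
      proof
        fix w assume "w \<in> {x * v | x. x \<in> P}"
        then obtain x where "w = x * v" "x \<in> P" by blast
        then obtain r where "w = (r * a) * v" unfolding Pa lprinc_iff by blast
        then have "w = r * (a * v)" by (simp add: mult.assoc)
        then show "w \<in> P" using li_mult[OF P(1) av] by simp
      qed
      have "u \<in> P \<or> v \<in> P" using cp uv sub unfolding completely_prime_def by blast
      then show False using un vn by blast
    qed
    show "maximal_left_ideal P" unfolding maximal_left_ideal_def
    proof (intro conjI allI impI)
      show "left_ideal P" by (rule P(1))
      show "P \<noteq> UNIV" by (rule PU)
      fix J assume J: "left_ideal J \<and> P \<subseteq> J"
      obtain c where Jc: "J = lprinc c" using PID_l[OF PID] J by blast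
      have "a \<in> J" using J Pa self_lprinc by blast
      then obtain d where adc: "a = d * c" unfolding Jc lprinc_iff by blast
      then have "nc_unit d \<or> nc_unit c" using ni unfolding nc_irreducible_def by blast
      then show "J = P \<or> J = UNIV"
      proof
        assume "nc_unit d"
        then obtain d' where "d' * d = 1" unfolding nc_unit_def by blast
        then have "c = d' * a" using adc by (simp add: mult.assoc[symmetric])
        then have "c \<in> P" unfolding Pa lprinc_iff by blast
        then have "J \<subseteq> P" unfolding Jc by (rule lprinc_sub[OF P(1)])
        then show ?thesis using J by blast
      next
        assume "nc_unit c"
        then show ?thesis using Jc unit_lprinc by blast
      qed
    qed
  next
    assume mx: "maximal_left_ideal P"
    have PU: "P \<noteq> UNIV" using mx unfolding maximal_left_ideal_def by blast
    have mxJ: "J = P \<or> J = UNIV" if "left_ideal J" "P \<subseteq> J" for J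
      using mx that unfolding maximal_left_ideal_def by blast
    show "completely_prime P" unfolding completely_prime_def
    proof (intro conjI allI impI)
      show "P \<noteq> UNIV" by (rule PU)
      fix x b assume h: "x * b \<in> P \<and> {y * b | y. y \<in> P} \<subseteq> P"
      show "x \<in> P \<or> b \<in> P"
      proof (cases "x \<in> P")
        case True
        then show ?thesis by blast
      next
        case False
        then have xn: "x \<notin> P" .
        define J where "J = {p + r * x | p r. p \<in> P}"
        have "left_ideal J"
        proof -
          have "(0::'a) = 0 + 0 * x" by simp
          then have "0 \<in> J" unfolding J_def using li_0[OF P(1)] by blast
          moreover have "y + z \<in> J" if hh: "y \<in> J" "z \<in> J" for y z
          proof -
            obtain p r p' r' where "y = p + r * x" "p \<in> P" "z = p' + r' * x" "p' \<in> P"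
              using hh unfolding J_def by blast
            then have "y + z = (p + p') + (r + r') * x" "p + p' \<in> P"
              by (simp_all add: algebra_simps li_add[OF P(1)])
            then show ?thesis unfolding J_def by blast
          qed
          moreover have "- y \<in> J" if hh: "y \<in> J" for y
          proof -
            obtain p r where "y = p + r * x" "p \<in> P" using hh unfolding J_def by blast
            then have "- y = (- p) + (- r) * x" "- p \<in> P"
              by (simp_all add: li_neg[OF P(1)])
            then show ?thesis unfolding J_def by blast
          qed
          moreover have "t * y \<in> J" if hh: "y \<in> J" for y t
          proof -
            obtain p r where "y = p + r * x" "p \<in> P" using hh unfolding J_def by blast
            then have "t * y = t * p + (t * r) * x" "t * p \<in> P"
              by (simp_all add: algebra_simps li_mult[OF P(1)])
            then show ?thesis unfolding J_def by blast
          qed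
          ultimately show ?thesis unfolding left_ideal_def by blast
        qed
        moreover have "P \<subseteq> J"
        proof
          fix p assume "p \<in> P"
          have "p = p + 0 * x" by simp
          then show "p \<in> J" unfolding J_def using \<open>p \<in> P\<close> by blast
        qed
        moreover have "x \<in> J"
        proof -
          have "x = 0 + 1 * x" by simp
          then show ?thesis unfolding J_def using li_0[OF P(1)] by blast
        qed
        ultimately have "J = UNIV" using mxJ xn by blast
        then have "1 \<in> J" by simp
        then obtain p0 r where p0: "p0 \<in> P" and one: "1 = p0 + r * x" unfolding J_def by blast
        have beq: "b = p0 * b + r * (x * b)"
        proof -
          have "b = (p0 + r * x) * b" using one by simp
          then show ?thesis by (simp add: algebra_simps)
        qed
        moreover have "p0 * b \<in> P" using h p0 by blast
        moreover have "r * (x * b) \<in> P" using li_mult[OF P(1)] h by blast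
        ultimately have sP: "p0 * b + r * (x * b) \<in> P" using li_add[OF P(1)] by blast
        have "b \<in> P" by (subst beq, rule sP)
        then show ?thesis by blast
      qed
    qed
  qed
  show ?thesis using part1 part2 by blast
qed

end
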